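(* Let $\theta\in(0,1)$, $T>0$, and let $b\in L^\infty([0,\infty),C_b^\theta(\mathbb{R}^d,\mathbb{R}^d))$, $\sigma\in L^\infty([0,\infty),C_b^{1+\theta}(\mathbb{R}^d,\mathbb{R}^d\otimes\mathbb{R}^d))$ be such that $a=\sigma\sigma^*$ is everywhere invertible with $\|a^{-1}\|_0:=\sup_{t,x}\|a^{-1}(t,x)\|_{HS}<\infty$. Let $\lambda>0$ be such that the unique solution $\psi=\psi_\lambda\in L^\infty([0,\infty),C_b^{2+\theta}(\mathbb{R}^d,\mathbb{R}^d))$ of $$\partial_t\psi+\tfrac12\mathrm{Tr}[a(t,x)\nabla^2\psi]+\langle b(t,x),\nabla\psi\rangle-\lambda\psi=b\quad\text{on }[0,\infty)\times\mathbb{R}^d$$ satisfies $\sup_{t,x}\|\nabla\psi(t,x)\|_{HS}\le\frac12$, and suppose that for each $t$ the map $\Psi_t(x)=x+\psi(t,x)$ is a $C^2$-diffeomorphism of $\mathbb{R}^d$ with inverse $\Psi_t^{-1}$, where $\nabla\Psi_t$, $\nabla^2\Psi_t$ and $\nabla\Psi_t^{-1}$ are bounded uniformly in $t$ and $\nabla\Psi_t^{-1}(x)=\sum_{k\ge0}[-\nabla\psi(t,\Psi_t^{-1}(x))]^k$. Define $$\hat\sigma(t,x)=\nabla\Psi_t(\Psi_t^{-1}(x))\,\sigma(t,\Psi_t^{-1}(x)),\qquad \hat b(t,x)=\lambda\,\psi(t,\Psi_t^{-1}(x)).$$ Then there exist positive constants $K_1,\kappa_1,\delta_1$ such that for all $0\le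 t\le T$ and $x,y\in\mathbb{R}^d$: (1) $\|\hat\sigma(t,x)-\hat\sigma(t,y)\|_{HS}^2+2\langle\hat b(t,x)-\hat b(t,y),x-y\rangle\le K_1|x-y|^2$; (2) $\hat\sigma(t,x)\hat\sigma(t,x)^*\ge\kappa_1^2\,\mathrm{Id}$; (3) $|(\hat\sigma(t,x)-\hat\sigma(t,y))(x-y)|\le\delta_1|x-y|$.
   Context: $L^\infty([0,\infty),C_b^{n+\theta})$ consists of bounded Borel functions on $[0,\infty)\times\mathbb{R}^d$ whose spatial derivatives up to order $n$ are bounded and whose $n$-th spatial derivatives are $\theta$-Hölder continuous in $x$ uniformly in $t$ (norms taken as Euclidean or Hilbert–Schmidt for vector/matrix-valued functions). $\|\cdot\|_{HS}$ is the Hilbert–Schmidt norm, and $A\ge c\,\mathrm{Id}$ means $\langle Az,z\rangle\ge c|z|^2$ for all $z$. *)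

theory Defs
  imports "HOL-Analysis.Analysis"
begin

definition partial :: "(real^'n \<Rightarrow> 'b::real_normed_vector) \<Rightarrow> 'n \<Rightarrow> real^'n \<Rightarrow> 'b" where
  "partial f k x = frechet_derivative f (at x) (axis k 1)"

definition jac :: "(real^'n \<Rightarrow> real^'m) \<Rightarrow> real^'n \<Rightarrow> real^'n^'m" where
  "jac f x = (\<chi> i j. partial f j x $ i)"

primrec mpow :: "real^'n^'n \<Rightarrow> nat \<Rightarrow> real^'n^'n" where
  "mpow M 0 = mat 1"
| "mpow M (Suc k) = M ** mpow M k"

definition holder_bdd :: "real \<Rightarrow> (real \<Rightarrow> real^'n \<Rightarrow> 'b::real_normed_vector) \<Rightarrow> bool" where
  "holder_bdd \<theta> f \<longleftrightarrow> (\<exists>C. \<forall>t\<ge>0. \<forall>x y.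
      norm (f t x) \<le> C \<and> norm (f t x - f t y) \<le> C * norm (x - y) powr \<theta>)"

definition bdd_unif :: "(real \<Rightarrow> real^'n \<Rightarrow> 'b::real_normed_vector) \<Rightarrow> bool" where
  "bdd_unif f \<longleftrightarrow> (\<exists>C. \<forall>t\<ge>0. \<forall>x. norm (f t x) \<le> C)"

definition borel_tx :: "(real \<Rightarrow> real^'n \<Rightarrow> 'b::real_normed_vector) \<Rightarrow> bool" where
  "borel_tx f \<longleftrightarrow> (\<lambda>p. f (fst p) (snd p)) \<in> borel_measurable (restrict_space borel ({0..} \<times> UNIV))"

definition Linf_C0 :: "real \<Rightarrow> (real \<Rightarrow> real^'n \<Rightarrow> 'b::real_normed_vector) \<Rightarrow> bool" where
  "Linf_C0 \<theta> f \<longleftrightarrow> borel_tx f \<and> holder_bdd \<theta> f"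

definition Linf_C1 :: "real \<Rightarrow> (real \<Rightarrow> real^'n \<Rightarrow> 'b::real_normed_vector) \<Rightarrow> bool" where
  "Linf_C1 \<theta> f \<longleftrightarrow> borel_tx f \<and> bdd_unif f \<and>
     (\<forall>t\<ge>0. \<forall>x. f t differentiable (at x)) \<and>
     (\<forall>k. holder_bdd \<theta> (\<lambda>t. partial (f t) k))"

definition Linf_C2 :: "real \<Rightarrow> (real \<Rightarrow> real^'n \<Rightarrow> 'b::real_normed_vector) \<Rightarrow> bool" where
  "Linf_C2 \<theta> f \<longleftrightarrow> borel_tx f \<and> bdd_unif f \<and>
     (\<forall>t\<ge>0. \<forall>x. f t differentiable (at x)) \<and>
     (\<forall>t\<ge>0. \<forall>k x. partial (f t) k differentiable (at x)) \<and>
     (\<forall>k. bdd_unif (\<lambda>t. partial (f t) k)) \<and>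
     (\<forall>k j. holder_bdd \<theta> (\<lambda>t. partial (partial (f t) k) j))"

definition C2 :: "(real^'n \<Rightarrow> real^'n) \<Rightarrow> bool" where
  "C2 g \<longleftrightarrow> (\<forall>x. g differentiable (at x)) \<and>
     (\<forall>k x. partial g k differentiable (at x)) \<and>
     (\<forall>k j. continuous_on UNIV (partial (partial g k) j))"

definition gen_op :: "real^'n^'n \<Rightarrow> real^'n \<Rightarrow> (real^'n \<Rightarrow> real^'n) \<Rightarrow> real^'n \<Rightarrow> real^'n" where
  "gen_op A B u x = (\<chi> i. (1/2) * (\<Sum>j\<in>UNIV. \<Sum>k\<in>UNIV. A $ j $ k * partial (partial u k) j x $ i))
                     + jac u x *v B"

end

theory Submission imports Defs begin

lemma mnorm_sq: "norm (M::real^'n^'m)^2 = (\<Sum>i\<in>UNIV. \<Sum>j\<in>UNIV. (M$i$j)^2)"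
  by (simp only: power2_norm_eq_inner) (simp add: inner_vec_def power2_eq_square)

lemma vnorm_sq: "norm (v::real^'n)^2 = (\<Sum>i\<in>UNIV. (v$i)^2)"
  by (simp only: power2_norm_eq_inner) (simp add: inner_vec_def power2_eq_square)

lemma norm_transpose: "norm (transpose (M::real^'n^'m)) = norm M"
proof -
  have "norm (transpose M)^2 = norm M^2"
    unfolding mnorm_sq transpose_def by (simp, rule sum.swap)
  then show ?thesis by (simp add: power2_eq_iff_nonneg)
qed

lemma rows_sq: "norm (A::('a::real_normed_vector)^'n)^2 = (\<Sum>i\<in>UNIV. norm (A$i)^2)"
  unfolding norm_vec_def L2_set_def by (simp add: sum_nonneg)

lemma vnorm_le_sum: "norm (x::'a::real_normed_vector^'n) \<le> (\<Sum>i\<in>UNIV. norm (x$i))"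
  by (simp add: norm_vec_def L2_set_le_sum)

lemma norm_mv: "norm ((A::real^'n^'m) *v x) \<le> norm A * norm x"
proof -
  have r: "((A *v x)$i)^2 \<le> norm (A$i)^2 * norm x^2" for i
  proof -
    have "(A *v x)$i = A$i \<bullet> x" by (simp add: matrix_vector_mult_def inner_vec_def)
    then have c: "\<bar>(A *v x)$i\<bar> \<le> norm (A$i) * norm x" by (simp add: Cauchy_Schwarz_ineq2)
    show ?thesis using power_mono[OF c abs_ge_zero, of 2] by (simp add: power_mult_distrib)
  qed
  have "norm (A *v x)^2 \<le> (\<Sum>i\<in>UNIV. norm (A$i)^2 * norm x^2)"
    by (subst vnorm_sq) (rule sum_mono, rule r)
  also have "\<dots> = norm A^2 * norm x^2"
    by (simp only: rows_sq[of A] sum_distrib_right)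
  finally have "norm (A *v x)^2 \<le> (norm A * norm x)^2" by (simp add: power_mult_distrib)
  then show ?thesis by (rule power2_le_imp_le) simp
qed

lemma norm_mm: "norm ((A::real^'n^'m) ** (B::real^'k^'n)) \<le> norm A * norm B"
proof -
  have r: "norm ((A ** B)$i)^2 \<le> norm (A$i)^2 * norm B^2" for i
  proof -
    have "(A ** B)$i = transpose B *v (A$i)"
      by (simp add: matrix_matrix_mult_def matrix_vector_mult_def transpose_def vec_eq_iff mult.commute)
    then have c: "norm ((A ** B)$i) \<le> norm (A$i) * norm B"
      using norm_mv[of "transpose B" "A$i"] by (simp add: norm_transpose mult.commute)
    show ?thesis using power_mono[OF c norm_ge_zero, of 2] by (simp add: power_mult_distrib)
  qed
  have "norm (A ** B)^2 = (\<Sum>i\<in>UNIV. norm ((A ** B)$i)^2)"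
    by (rule rows_sq)
  also have "\<dots> \<le> (\<Sum>i\<in>UNIV. norm (A$i)^2 * norm B^2)" by (rule sum_mono) (rule r)
  also have "\<dots> = norm A^2 * norm B^2"
    by (simp only: rows_sq[of A] sum_distrib_right)
  finally have "norm (A ** B)^2 \<le> (norm A * norm B)^2" by (simp add: power_mult_distrib)
  then show ?thesis by (rule power2_le_imp_le) simp
qed

lemma jac_jacobian: "jac f x = jacobian f (at x)"
  unfolding jac_def partial_def jacobian_def matrix_def by simp

lemma jac_deriv: "(f::real^'n\<Rightarrow>real^'m) differentiable (at x) \<Longrightarrow> (f has_derivative (\<lambda>h. jac f x *v h)) (at x)"
  unfolding jac_jacobian using jacobian_works by blast

lemma lip_jac:
  fixes f :: "real^'n \<Rightarrow> real^'m"
  assumes "\<And>x. f differentiable (at x)" "\<And>x. norm (jac f x) \<le> B"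
  shows "norm (f x - f y) \<le> B * norm (x - y)"
proof (rule differentiable_bound[where S=UNIV and f'="\<lambda>x h. jac f x *v h"])
  show "(f has_derivative (\<lambda>h. jac f z *v h)) (at z within UNIV)" for z
    using jac_deriv assms(1) by auto
  show "onorm (\<lambda>h. jac f z *v h) \<le> B" for z
    by (rule onorm_le) (meson assms(2) mult_right_mono norm_ge_zero norm_mv order_trans)
qed auto

lemma lip_partial:
  fixes f :: "real^'n \<Rightarrow> 'b::real_normed_vector"
  assumes "\<And>x. f differentiable (at x)" "\<And>k x. norm (partial f k x) \<le> C"
  shows "norm (f x - f y) \<le> (C * CARD('n)) * norm (x - y)"
proof -
  have D: "(f has_derivative frechet_derivative f (at z)) (at z within UNIV)" for z
    using assms(1)[of z] frechet_derivative_works by blast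
  have O: "onorm (frechet_derivative f (at z)) \<le> C * CARD('n)" for z
  proof (rule onorm_le)
    fix h :: "real^'n"
    have lin: "linear (frechet_derivative f (at z))"
      using assms(1) frechet_derivative_works has_derivative_linear by blast
    have "frechet_derivative f (at z) h = frechet_derivative f (at z) (\<Sum>i\<in>UNIV. (h$i) *s axis i 1)"
      by (simp only: basis_expansion)
    also have "\<dots> = (\<Sum>i\<in>UNIV. (h$i) *\<^sub>R frechet_derivative f (at z) (axis i 1))"
      using lin by (simp only: linear_sum[OF lin] linear_scale[OF lin] scalar_mult_eq_scaleR)
    finally have "norm (frechet_derivative f (at z) h) = norm (\<Sum>i\<in>UNIV. (h$i) *\<^sub>R frechet_derivative f (at z) (axis i 1))"
      by (rule arg_cong)
    also have "\<dots> \<le> (\<Sum>i\<in>UNIV. norm ((h$i) *\<^sub>R frechet_derivative f (at z) (axis i 1)))"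
      by (rule norm_sum)
    also have "\<dots> \<le> (\<Sum>i\<in>(UNIV::'n set). norm h * C)"
    proof (rule sum_mono)
      fix i
      have "\<bar>h$i\<bar> \<le> norm h" by (rule component_le_norm_cart)
      moreover have "norm (frechet_derivative f (at z) (axis i 1)) \<le> C"
        using assms(2)[of i z] by (simp add: partial_def)
      ultimately show "norm ((h$i) *\<^sub>R frechet_derivative f (at z) (axis i 1)) \<le> norm h * C"
        unfolding norm_scaleR by (rule mult_mono) auto
    qed
    also have "\<dots> = C * CARD('n) * norm h" by simp
    finally show "norm (frechet_derivative f (at z) h) \<le> C * CARD('n) * norm h" .
  qed
  show ?thesis
    apply (rule differentiable_bound[of UNIV f "\<lambda>x. frechet_derivative f (at x)"])
    using D O by auto
qed

lemma jac_lip: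
  fixes g :: "real^'n \<Rightarrow> real^'m" and C :: real
  assumes d: "\<And>k x. partial g k differentiable (at x)"
    and b: "\<And>k j x. norm (partial (partial g k) j x) \<le> C"
  shows "norm (jac g u - jac g v) \<le> (CARD('n) * (C * CARD('n))) * norm (u - v)"
proof -
  have l: "norm (partial g k u - partial g k v) \<le> (C * CARD('n)) * norm (u - v)" for k
    by (rule lip_partial) (use d b in auto)
  have e: "transpose (jac g u - jac g v) = (\<chi> k. partial g k u - partial g k v)"
    by (simp add: transpose_def jac_def vec_eq_iff)
  have "norm (jac g u - jac g v) = norm (\<chi> k. partial g k u - partial g k v)"
    by (metis e norm_transpose)
  also have "\<dots> \<le> (\<Sum>k\<in>UNIV. norm (partial g k u - partial g k v))"
    using vnorm_le_sum[of "\<chi> k. partial g k u - partial g k v"] by simp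
  also have "\<dots> \<le> (\<Sum>k\<in>(UNIV::'n set). (C * CARD('n)) * norm (u - v))"
    by (rule sum_mono) (rule l)
  also have "\<dots> = (CARD('n) * (C * CARD('n))) * norm (u - v)" by simp
  finally show ?thesis .
qed

lemma jac_plus_id:
  fixes f :: "real^'n \<Rightarrow> real^'n"
  assumes "f differentiable (at x)"
  shows "jac (\<lambda>y. y + f y) x = mat 1 + jac f x"
proof -
  have fd: "(f has_derivative frechet_derivative f (at x)) (at x)"
    using assms frechet_derivative_works by blast
  have "((\<lambda>y. y + f y) has_derivative (\<lambda>h. h + frechet_derivative f (at x) h)) (at x)"
    by (rule has_derivative_add[OF has_derivative_ident fd])
  then have "frechet_derivative (\<lambda>y. y + f y) (at x) = (\<lambda>h. h + frechet_derivative f (at x) h)"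
    by (rule frechet_derivative_at[symmetric])
  then show ?thesis
    unfolding jac_def partial_def by (simp add: vec_eq_iff mat_def axis_def)
qed

lemma quad_form: "((M ** transpose M) *v z) \<bullet> z = norm (transpose M *v (z::real^'m))^2"
proof -
  have "((M ** transpose M) *v z) \<bullet> z = z \<bullet> (M *v (transpose M *v z))"
    by (simp add: matrix_vector_mul_assoc[symmetric] inner_commute)
  also have "\<dots> = (z v* M) \<bullet> (transpose M *v z)"
    by (simp add: dot_lmul_matrix)
  also have "\<dots> = (transpose M *v z) \<bullet> (transpose M *v z)"
    by simp
  finally show ?thesis by (simp add: power2_norm_eq_inner)
qed

lemma matrix_inv_left:
  assumes "invertible (A::real^'n^'m)"
  shows "matrix_inv A ** A = mat 1"
proof -
  have "A ** matrix_inv A = mat 1 \<and> matrix_inv A ** A = mat 1"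
    unfolding matrix_inv_def by (rule someI_ex) (use assms in \<open>simp add: invertible_def\<close>)
  then show ?thesis by simp
qed

lemma mm_diff: "(A::real^'n^'m) ** (B::real^'k^'n) - A' ** B' = (A - A') ** B + A' ** (B - B')"
  by (simp add: matrix_matrix_mult_def vec_eq_iff algebra_simps sum_subtractf sum.distrib)

lemma prod_lip:
  fixes A A' :: "real^'n^'m" and B B' :: "real^'k^'n"
  assumes "norm (A - A') \<le> a * d" "norm (B - B') \<le> b * d" "norm B \<le> cB" "norm A' \<le> cA"
    "0 \<le> a" "0 \<le> b" "0 \<le> d"
  shows "norm (A ** B - A' ** B') \<le> (a * cB + cA * b) * d"
proof -
  have "norm (A ** B - A' ** B') \<le> norm ((A - A') ** B) + norm (A' ** (B - B'))"
    unfolding mm_diff by (rule norm_triangle_ineq)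
  also have "\<dots> \<le> norm (A - A') * norm B + norm A' * norm (B - B')"
    by (intro add_mono norm_mm)
  also have "\<dots> \<le> (a * d) * cB + cA * (b * d)"
    using assms norm_ge_zero[of A'] by (intro add_mono mult_mono assms) (auto intro: order_trans[OF norm_ge_zero])
  also have "\<dots> = (a * cB + cA * b) * d" by (simp add: algebra_simps)
  finally show ?thesis .
qed

lemma transpose_id_plus: "transpose (mat 1 + P) = mat 1 + transpose (P::real^'n^'n)"
  by (simp add: vec_eq_iff transpose_def mat_def)

theorem lemma3p4:
  fixes \<theta> T lam :: real
    and b :: "real \<Rightarrow> real^'d \<Rightarrow> real^'d"
    and \<sigma> :: "real \<Rightarrow> real^'d \<Rightarrow> real^'d^'d"
    and \<psi> :: "real \<Rightarrow> real^'d \<Rightarrow> real^'d"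
    and \<Psi>inv :: "real \<Rightarrow> real^'d \<Rightarrow> real^'d"
  assumes theta: "0 < \<theta>" "\<theta> < 1"
    and T: "T > 0"
    and b_reg: "Linf_C0 \<theta> b"
    and sigma_reg: "Linf_C1 \<theta> \<sigma>"
    and a_inv: "\<forall>t\<ge>0. \<forall>x. invertible (\<sigma> t x ** transpose (\<sigma> t x))"
    and a_inv_bdd: "\<exists>C. \<forall>t\<ge>0. \<forall>x. norm (matrix_inv (\<sigma> t x ** transpose (\<sigma> t x))) \<le> C"
    and lam: "lam > 0"
    and psi_reg: "Linf_C2 \<theta> \<psi>"
    and psi_pde: "\<forall>x. \<forall>s t. 0 \<le> s \<longrightarrow> s \<le> t \<longrightarrow>
        ((\<lambda>r. b r x + lam *\<^sub>R \<psi> r x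
               - gen_op (\<sigma> r x ** transpose (\<sigma> r x)) (b r x) (\<psi> r) x)
          has_integral (\<psi> t x - \<psi> s x)) {s..t}"
    and psi_grad: "\<forall>t\<ge>0. \<forall>x. norm (jac (\<psi> t) x) \<le> 1/2"
    and inv1: "\<forall>t\<ge>0. \<forall>x. \<Psi>inv t (x + \<psi> t x) = x"
    and inv2: "\<forall>t\<ge>0. \<forall>y. \<Psi>inv t y + \<psi> t (\<Psi>inv t y) = y"
    and Psi_C2: "\<forall>t\<ge>0. C2 (\<lambda>x. x + \<psi> t x)"
    and Psiinv_C2: "\<forall>t\<ge>0. C2 (\<Psi>inv t)"
    and Psi_grad_bdd: "\<exists>C. \<forall>t\<ge>0. \<forall>x. norm (jac (\<lambda>y. y + \<psi> t y) x) \<le> C"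
    and Psi_hess_bdd: "\<exists>C. \<forall>t\<ge>0. \<forall>x k j.
        norm (partial (partial (\<lambda>y. y + \<psi> t y) k) j x) \<le> C"
    and Psiinv_grad_bdd: "\<exists>C. \<forall>t\<ge>0. \<forall>x. norm (jac (\<Psi>inv t) x) \<le> C"
    and Psiinv_series: "\<forall>t\<ge>0. \<forall>x.
        (\<lambda>k. mpow (- jac (\<psi> t) (\<Psi>inv t x)) k) sums (jac (\<Psi>inv t) x)"
  shows "\<exists>K1 \<kappa>1 \<delta>1. K1 > 0 \<and> \<kappa>1 > 0 \<and> \<delta>1 > 0 \<and>
    (let \<sigma>h = (\<lambda>t x. jac (\<lambda>y. y + \<psi> t y) (\<Psi>inv t x) ** \<sigma> t (\<Psi>inv t x));
         bh = (\<lambda>t x. lam *\<^sub>R \<psi> t (\<Psi>inv t x))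
     in \<forall>t\<in>{0..T}. \<forall>x y.
        norm (\<sigma>h t x - \<sigma>h t y)^2 + 2 * ((bh t x - bh t y) \<bullet> (x - y)) \<le> K1 * norm (x - y)^2
      \<and> (\<forall>z. ((\<sigma>h t x ** transpose (\<sigma>h t x)) *v z) \<bullet> z \<ge> \<kappa>1^2 * norm z ^ 2)
      \<and> norm ((\<sigma>h t x - \<sigma>h t y) *v (x - y)) \<le> \<delta>1 * norm (x - y))"
proof -
  let ?Psi = "\<lambda>t y. y + \<psi> t y"
  from sigma_reg obtain Cs0 where Cs0: "\<forall>t\<ge>0. \<forall>x. norm (\<sigma> t x) \<le> Cs0"
    unfolding Linf_C1_def bdd_unif_def by blast
  have sdiff: "\<sigma> t differentiable (at x)" if "t \<ge> 0" for t x
    using sigma_reg that unfolding Linf_C1_def by blast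
  have "\<forall>k. \<exists>C. \<forall>t\<ge>0. \<forall>x. norm (partial (\<sigma> t) k x) \<le> C"
    using sigma_reg unfolding Linf_C1_def holder_bdd_def by blast
  then obtain Cp where Cp: "\<And>k t x. t \<ge> 0 \<Longrightarrow> norm (partial (\<sigma> t) k x) \<le> Cp k"
    by metis
  define Ps where "Ps = (\<Sum>k\<in>UNIV. \<bar>Cp k\<bar>)"
  have Psb: "norm (partial (\<sigma> t) k x) \<le> Ps" if "t \<ge> 0" for t k x
  proof -
    have "Cp k \<le> \<bar>Cp k\<bar>" by simp
    also have "\<dots> \<le> Ps" unfolding Ps_def
      by (rule member_le_sum) auto
    finally show ?thesis using Cp[OF that, of k x] by linarith
  qed
  define Ls where "Ls = max 0 (Ps * CARD('d))"
  have sLip: "norm (\<sigma> t u - \<sigma> t v) \<le> Ls * norm (u - v)" if "t \<ge> 0" for t u v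
  proof -
    have "norm (\<sigma> t u - \<sigma> t v) \<le> (Ps * CARD('d)) * norm (u - v)"
      by (rule lip_partial) (use sdiff Psb that in auto)
    also have "\<dots> \<le> Ls * norm (u - v)" unfolding Ls_def
      by (rule mult_right_mono) auto
    finally show ?thesis .
  qed
  define Cs where "Cs = max Cs0 1"
  have Csb: "norm (\<sigma> t u) \<le> Cs" if "t \<ge> 0" for t u
    using Cs0 that unfolding Cs_def by (meson max.coboundedI1)
  have pdiff: "\<psi> t differentiable (at x)" if "t \<ge> 0" for t x
    using psi_reg that unfolding Linf_C2_def by blast
  have psiLip: "norm (\<psi> t u - \<psi> t v) \<le> 1/2 * norm (u - v)" if "t \<ge> 0" for t u v
    by (rule lip_jac) (use pdiff psi_grad that in auto)
  have invLip: "norm (\<Psi>inv t x - \<Psi>inv t y) \<le> 2 * norm (x - y)" if "t \<ge> 0" for t x y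
  proof -
    define u where "u = \<Psi>inv t x"
    define v where "v = \<Psi>inv t y"
    have ex: "x = u + \<psi> t u" "y = v + \<psi> t v" unfolding u_def v_def using inv2 that by auto
    have eq: "u - v = (x - y) - (\<psi> t u - \<psi> t v)" unfolding ex by (simp add: algebra_simps)
    have "norm (u - v) \<le> norm (x - y) + norm (\<psi> t u - \<psi> t v)"
      unfolding eq by (rule norm_triangle_ineq4)
    then show ?thesis using psiLip[OF that, of u v] unfolding u_def v_def by linarith
  qed
  from Psi_grad_bdd obtain CJ0 where CJ0: "\<forall>t\<ge>0. \<forall>x. norm (jac (?Psi t) x) \<le> CJ0" by blast
  define CJ where "CJ = max CJ0 0"
  have CJb: "norm (jac (?Psi t) x) \<le> CJ" if "t \<ge> 0" for t x
    using CJ0 that unfolding CJ_def by (meson max.coboundedI1)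
  from Psi_hess_bdd obtain CH where CH: "\<forall>t\<ge>0. \<forall>x k j. norm (partial (partial (?Psi t) k) j x) \<le> CH"
    by blast
  define LJ where "LJ = max 0 (CARD('d) * (CH * CARD('d)))"
  have JLip: "norm (jac (?Psi t) u - jac (?Psi t) v) \<le> LJ * norm (u - v)" if "t \<ge> 0" for t u v
  proof -
    have d: "partial (?Psi t) k differentiable (at x)" for k x
      using Psi_C2 that unfolding C2_def by blast
    have "norm (jac (?Psi t) u - jac (?Psi t) v) \<le> (CARD('d) * (CH * CARD('d))) * norm (u - v)"
      by (rule jac_lip) (use d CH that in auto)
    also have "\<dots> \<le> LJ * norm (u - v)" unfolding LJ_def
      by (rule mult_right_mono) auto
    finally show ?thesis .
  qed
  define sh where "sh = (\<lambda>t x. jac (\<lambda>y. y + \<psi> t y) (\<Psi>inv t x) ** \<sigma> t (\<Psi>inv t x))"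
  define bh where "bh = (\<lambda>t x. lam *\<^sub>R \<psi> t (\<Psi>inv t x))"
  define Lh where "Lh = 2 * (LJ * Cs + CJ * Ls)"
  have Lh0: "Lh \<ge> 0" unfolding Lh_def LJ_def Ls_def CJ_def Cs_def by auto
  have shLip: "norm (sh t x - sh t y) \<le> Lh * norm (x - y)" if "t \<ge> 0" for t x y
  proof -
    let ?u = "\<Psi>inv t x" and ?v = "\<Psi>inv t y"
    have "norm (sh t x - sh t y) \<le> (LJ * Cs + CJ * Ls) * norm (?u - ?v)"
      unfolding sh_def
      by (rule prod_lip) (use JLip sLip Csb CJb that in \<open>auto simp: LJ_def Ls_def\<close>)
    also have "\<dots> \<le> (LJ * Cs + CJ * Ls) * (2 * norm (x - y))"
      by (rule mult_left_mono[OF invLip[OF that]])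
        (simp add: LJ_def Ls_def CJ_def Cs_def)
    also have "\<dots> = Lh * norm (x - y)" unfolding Lh_def by simp
    finally show ?thesis .
  qed
  have shb: "norm (sh t x) \<le> CJ * Cs" if "t \<ge> 0" for t x
  proof -
    have "norm (sh t x) \<le> norm (jac (?Psi t) (\<Psi>inv t x)) * norm (\<sigma> t (\<Psi>inv t x))"
      unfolding sh_def by (rule norm_mm)
    also have "\<dots> \<le> CJ * Cs"
      by (rule mult_mono) (use CJb Csb that in \<open>auto simp: Cs_def CJ_def\<close>)
    finally show ?thesis .
  qed
  have bhLip: "norm (bh t x - bh t y) \<le> lam * norm (x - y)" if "t \<ge> 0" for t x y
  proof -
    have "bh t x - bh t y = lam *\<^sub>R (\<psi> t (\<Psi>inv t x) - \<psi> t (\<Psi>inv t y))"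
      unfolding bh_def by (simp add: scaleR_diff_right)
    then have "norm (bh t x - bh t y) = lam * norm (\<psi> t (\<Psi>inv t x) - \<psi> t (\<Psi>inv t y))"
      using lam by simp
    also have "\<dots> \<le> lam * (1/2 * norm (\<Psi>inv t x - \<Psi>inv t y))"
      using psiLip[OF that] lam by (intro mult_left_mono) auto
    also have "\<dots> \<le> lam * norm (x - y)"
      using invLip[OF that, of x y] lam by (intro mult_left_mono) auto
    finally show ?thesis .
  qed
  define K1 where "K1 = Lh^2 + 2 * lam + 1"
  define \<delta>1 where "\<delta>1 = 2 * (CJ * Cs) + 1"
  from a_inv_bdd obtain CA0 where CA0: "\<forall>t\<ge>0. \<forall>x. norm (matrix_inv (\<sigma> t x ** transpose (\<sigma> t x))) \<le> CA0"
    by blast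
  define CA where "CA = max CA0 1"
  define \<kappa>1 where "\<kappa>1 = 1 / (2 * CA * Cs)"
  have CApos: "CA > 0" and Cspos: "Cs > 0" unfolding CA_def Cs_def by auto
  have k1pos: "\<kappa>1 > 0" unfolding \<kappa>1_def using CApos Cspos by simp
  have F1: "norm (sh t x - sh t y)^2 + 2 * ((bh t x - bh t y) \<bullet> (x - y)) \<le> K1 * norm (x - y)^2"
    if "t \<ge> 0" for t x y
  proof -
    have a: "norm (sh t x - sh t y)^2 \<le> Lh^2 * norm (x - y)^2"
      using power_mono[OF shLip[OF that, of x y] norm_ge_zero, where n=2] by (simp add: power_mult_distrib)
    have "(bh t x - bh t y) \<bullet> (x - y) \<le> norm (bh t x - bh t y) * norm (x - y)"
      by (rule norm_cauchy_schwarz)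
    also have "\<dots> \<le> lam * norm (x - y) * norm (x - y)"
      by (rule mult_right_mono[OF bhLip[OF that]]) simp
    finally have b: "(bh t x - bh t y) \<bullet> (x - y) \<le> lam * norm (x - y)^2"
      by (simp add: power2_eq_square)
    have "0 \<le> norm (x - y)^2" by simp
    moreover have "K1 * norm (x - y)^2 = Lh^2 * norm (x - y)^2 + 2 * (lam * norm (x - y)^2) + norm (x - y)^2"
      unfolding K1_def by (simp add: algebra_simps)
    ultimately show ?thesis using a b by linarith
  qed
  have F3: "norm ((sh t x - sh t y) *v (x - y)) \<le> \<delta>1 * norm (x - y)" if "t \<ge> 0" for t x y
  proof -
    have "norm ((sh t x - sh t y) *v (x - y)) \<le> norm (sh t x - sh t y) * norm (x - y)"
      by (rule norm_mv)
    also have "\<dots> \<le> (2 * (CJ * Cs)) * norm (x - y)"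
    proof (rule mult_right_mono)
      have "norm (sh t x - sh t y) \<le> norm (sh t x) + norm (sh t y)" by (rule norm_triangle_ineq4)
      then show "norm (sh t x - sh t y) \<le> 2 * (CJ * Cs)" using shb[OF that, of x] shb[OF that, of y] by linarith
    qed simp
    also have "\<dots> \<le> \<delta>1 * norm (x - y)" unfolding \<delta>1_def by (rule mult_right_mono) auto
    finally show ?thesis .
  qed
  have F2: "((sh t x ** transpose (sh t x)) *v z) \<bullet> z \<ge> \<kappa>1^2 * norm z ^ 2" if "t \<ge> 0" for t x z
  proof -
    let ?u = "\<Psi>inv t x"
    define S where "S = \<sigma> t ?u"
    define P where "P = jac (\<psi> t) ?u"
    define w where "w = transpose P *v z + z"
    have J: "jac (?Psi t) ?u = mat 1 + P" unfolding P_def by (rule jac_plus_id[OF pdiff[OF that]])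
    have "((sh t x ** transpose (sh t x)) *v z) \<bullet> z = norm (transpose (sh t x) *v z)^2"
      by (rule quad_form)
    also have "transpose (sh t x) *v z = transpose S *v w"
      unfolding sh_def J S_def[symmetric] w_def
      by (simp only: matrix_transpose_mul matrix_vector_mul_assoc[symmetric] transpose_id_plus
          matrix_vector_mult_add_rdistrib matrix_vector_mul_lid) (simp add: add.commute)
    finally have eq: "((sh t x ** transpose (sh t x)) *v z) \<bullet> z = norm (transpose S *v w)^2" .
    have Pb: "norm P \<le> 1/2" unfolding P_def using psi_grad that by blast
    have "norm (transpose P *v z) \<le> norm (transpose P) * norm z" by (rule norm_mv)
    also have "\<dots> \<le> 1/2 * norm z" unfolding norm_transpose by (rule mult_right_mono[OF Pb]) simp
    finally have "norm (transpose P *v z) \<le> 1/2 * norm z" .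
    moreover have "norm z \<le> norm w + norm (transpose P *v z)"
    proof -
      have "z = w - transpose P *v z" unfolding w_def by simp
      then have "norm z = norm (w - transpose P *v z)" by simp
      also have "\<dots> \<le> norm w + norm (transpose P *v z)" by (rule norm_triangle_ineq4)
      finally show ?thesis .
    qed
    ultimately have wz: "norm w \<ge> 1/2 * norm z" by linarith
    define A where "A = S ** transpose S"
    have Ainv: "invertible A" unfolding A_def S_def using a_inv that by blast
    have Ab: "norm (matrix_inv A) \<le> CA" unfolding A_def S_def CA_def using CA0 that by (meson max.coboundedI1)
    have "matrix_inv A *v (S *v (transpose S *v w)) = (matrix_inv A ** A) *v w"
      unfolding A_def by (simp only: matrix_vector_mul_assoc)
    then have "w = matrix_inv A *v (S *v (transpose S *v w))"
      by (simp add: matrix_inv_left[OF Ainv])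
    then have "norm w = norm (matrix_inv A *v (S *v (transpose S *v w)))" by simp
    also have "\<dots> \<le> norm (matrix_inv A) * norm (S *v (transpose S *v w))" by (rule norm_mv)
    also have "\<dots> \<le> CA * (Cs * norm (transpose S *v w))"
    proof (rule mult_mono)
      show "norm (S *v (transpose S *v w)) \<le> Cs * norm (transpose S *v w)"
        using norm_mv[of S "transpose S *v w"] Csb[OF that, of ?u] unfolding S_def[symmetric]
        by (meson mult_right_mono norm_ge_zero order_trans)
    qed (use Ab CApos in auto)
    finally have "norm w \<le> CA * Cs * norm (transpose S *v w)" by simp
    with wz have "1/2 * norm z \<le> CA * Cs * norm (transpose S *v w)" by linarith
    then have "\<kappa>1 * norm z \<le> norm (transpose S *v w)"
      unfolding \<kappa>1_def using CApos Cspos by (simp add: field_simps)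
    then have "(\<kappa>1 * norm z)^2 \<le> norm (transpose S *v w)^2"
      using k1pos by (intro power_mono) auto
    then show ?thesis unfolding eq by (simp add: power_mult_distrib)
  qed
  have K1pos: "K1 > 0" unfolding K1_def using lam by (simp add: add_nonneg_pos)
  have d1pos: "\<delta>1 > 0" unfolding \<delta>1_def CJ_def Cs_def by (simp add: add_nonneg_pos)
  show ?thesis
    unfolding Let_def
    apply (rule exI[of _ K1], rule exI[of _ \<kappa>1], rule exI[of _ \<delta>1])
    using K1pos k1pos d1pos F1 F2 F3 unfolding sh_def bh_def by auto
qed

end
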